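(* For every random variable $f$, the quantization $\widehat f$ is a well-defined bounded self-adjoint operator on $H$. If moreover $f\ge 0$, then $\|\widehat f\|\le\|f\|$, where $\|f\|=\left(\int|f|^2d\nu\right)^{1/2}$.
   Context: $(\Omega,\mathcal{A},\nu)$ is a probability space and $H=L_2(\Omega,\mathcal{A},\nu)$ is the complex Hilbert space with inner product $\langle f,g\rangle=\int\bar f g\,d\nu$. A random variable is a real-valued $f\in H$. For a random variable $f\ge 0$, its quantization $\widehat f$ is the operator on $H$ given by $(\widehat f g)(y)=\int\min[f(x),f(y)]\,g(x)\,d\nu(x)$. For an arbitrary random variable $f$, write $f=f^+-f^-$ with $f^+=\max(f,0)$, $f^-=-\min(f,0)$, and define $\widehat f=\widehat{f^+}-\widehat{f^-}$. *)

theory Defs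
  imports "HOL-Probability.Probability"
begin

text \<open>The complex Hilbert space H = L2(Omega, A, nu), represented by square-integrable
  complex-valued measurable functions (elements of H are their a.e.-classes).\<close>

definition L2 :: "'a measure \<Rightarrow> ('a \<Rightarrow> complex) set" where
  "L2 M = {g. g \<in> borel_measurable M \<and> integrable M (\<lambda>x. (cmod (g x))\<^sup>2)}"

definition L2norm :: "'a measure \<Rightarrow> ('a \<Rightarrow> complex) \<Rightarrow> real" where
  "L2norm M g = sqrt (\<integral>x. (cmod (g x))\<^sup>2 \<partial>M)"

definition L2inner :: "'a measure \<Rightarrow> ('a \<Rightarrow> complex) \<Rightarrow> ('a \<Rightarrow> complex) \<Rightarrow> complex" where
  "L2inner M g h = (\<integral>x. cnj (g x) * h x \<partial>M)"

definition random_var :: "'a measure \<Rightarrow> ('a \<Rightarrow> real) \<Rightarrow> bool" where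
  "random_var M f \<longleftrightarrow> f \<in> borel_measurable M \<and> integrable M (\<lambda>x. (f x)\<^sup>2)"

definition pos_part :: "('a \<Rightarrow> real) \<Rightarrow> 'a \<Rightarrow> real" where
  "pos_part f = (\<lambda>x. max (f x) 0)"

definition neg_part :: "('a \<Rightarrow> real) \<Rightarrow> 'a \<Rightarrow> real" where
  "neg_part f = (\<lambda>x. - min (f x) 0)"

definition quant_nonneg :: "'a measure \<Rightarrow> ('a \<Rightarrow> real) \<Rightarrow> ('a \<Rightarrow> complex) \<Rightarrow> 'a \<Rightarrow> complex" where
  "quant_nonneg M f g y = (\<integral>x. complex_of_real (min (f x) (f y)) * g x \<partial>M)"

definition quant :: "'a measure \<Rightarrow> ('a \<Rightarrow> real) \<Rightarrow> ('a \<Rightarrow> complex) \<Rightarrow> 'a \<Rightarrow> complex" where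
  "quant M f g y = quant_nonneg M (pos_part f) g y - quant_nonneg M (neg_part f) g y"

end

theory Submission
  imports Defs
begin

lemma cnj_meas[measurable (raw)]:
  "f \<in> borel_measurable M \<Longrightarrow> (\<lambda>x. cnj (f x)) \<in> borel_measurable M"
  by (rule borel_measurable_continuous_on) (auto intro: continuous_on_id)

context prob_space begin

lemma L2_meas: "g \<in> L2 M \<Longrightarrow> g \<in> borel_measurable M" by (simp add: L2_def)

lemma L2_int: assumes "g \<in> L2 M" shows "integrable M g"
proof -
  have m[measurable]: "g \<in> borel_measurable M" using assms by (simp add: L2_def)
  have "integrable M (\<lambda>x. cmod (g x))"
    by (rule square_integrable_imp_integrable) (use assms in \<open>auto simp: L2_def\<close>)
  then show ?thesis using integrable_norm_iff[OF m] by simp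
qed

lemma L1_le_L2: assumes "g \<in> L2 M"
  shows "(\<integral>x. cmod (g x) \<partial>M)\<^sup>2 \<le> (\<integral>x. (cmod (g x))\<^sup>2 \<partial>M)"
proof -
  have i1: "integrable M (\<lambda>x. cmod (g x))" using L2_int[OF assms] by simp
  have i2: "integrable M (\<lambda>x. (cmod (g x))\<^sup>2)" using assms by (simp add: L2_def)
  have "0 \<le> variance (\<lambda>x. cmod (g x))" by (rule Bochner_Integration.integral_nonneg) auto
  then show ?thesis using variance_eq[OF i1 i2] by simp
qed

lemma L1_le_norm: assumes "g \<in> L2 M"
  shows "(\<integral>x. cmod (g x) \<partial>M) \<le> L2norm M g"
  unfolding L2norm_def
  by (rule real_le_rsqrt) (rule L1_le_L2[OF assms])

lemma prod_int:
  fixes a b :: "'a \<Rightarrow> real"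
  assumes [measurable]: "a \<in> borel_measurable M" "b \<in> borel_measurable M"
    and "integrable M (\<lambda>x. (a x)\<^sup>2)" "integrable M (\<lambda>x. (b x)\<^sup>2)"
  shows "integrable M (\<lambda>x. a x * b x)"
proof (rule Bochner_Integration.integrable_bound)
  show "integrable M (\<lambda>x. (a x)\<^sup>2 + (b x)\<^sup>2)" using assms by auto
  show "AE x in M. norm (a x * b x) \<le> norm ((a x)\<^sup>2 + (b x)\<^sup>2)"
  proof (rule AE_I2)
    fix x
    have "0 \<le> (\<bar>a x\<bar> - \<bar>b x\<bar>)\<^sup>2" by simp
    then have "2 * (\<bar>a x\<bar> * \<bar>b x\<bar>) \<le> (a x)\<^sup>2 + (b x)\<^sup>2"
      by (simp add: power2_diff)
    moreover have "0 \<le> \<bar>a x\<bar> * \<bar>b x\<bar>" by simp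
    ultimately have "\<bar>a x\<bar> * \<bar>b x\<bar> \<le> (a x)\<^sup>2 + (b x)\<^sup>2" by linarith
    then show "norm (a x * b x) \<le> norm ((a x)\<^sup>2 + (b x)\<^sup>2)"
      by (simp add: abs_mult)
  qed
qed measurable

lemma qA:
  assumes phi[measurable]: "phi \<in> borel_measurable M" and pos: "\<And>x. 0 \<le> phi x"
    and g: "g \<in> L2 M"
  shows "integrable M (\<lambda>x. complex_of_real (min (phi x) (phi y)) * g x)"
proof -
  have [measurable]: "g \<in> borel_measurable M" using g by (simp add: L2_def)
  show ?thesis
  proof (rule Bochner_Integration.integrable_bound)
  show "integrable M (\<lambda>x. complex_of_real (phi y) * g x)" using L2_int[OF g] by simp
  show "AE x in M. norm (complex_of_real (min (phi x) (phi y)) * g x) \<le> norm (complex_of_real (phi y) * g x)"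
    using pos by (intro AE_I2) (auto simp: norm_mult intro!: mult_right_mono)
  qed measurable
qed

lemma qB:
  assumes phi[measurable]: "phi \<in> borel_measurable M" and pos: "\<And>x. 0 \<le> phi x"
    and g: "g \<in> L2 M"
  shows "cmod (quant_nonneg M phi g y) \<le> phi y * (\<integral>x. cmod (g x) \<partial>M)"
proof -
  have [measurable]: "g \<in> borel_measurable M" using g by (simp add: L2_def)
  have ig: "integrable M (\<lambda>x. cmod (g x))" using L2_int[OF g] by simp
  have "integrable M (\<lambda>x. norm (complex_of_real (min (phi x) (phi y)) * g x))"
    using qA[OF phi pos g, of y] by simp
  then have imin: "integrable M (\<lambda>x. min (phi x) (phi y) * cmod (g x))"
    using pos by (simp add: norm_mult)
  have "cmod (quant_nonneg M phi g y) \<le> (\<integral>x. norm (complex_of_real (min (phi x) (phi y)) * g x) \<partial>M)"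
    unfolding quant_nonneg_def by (rule integral_norm_bound)
  also have "\<dots> \<le> (\<integral>x. phi y * cmod (g x) \<partial>M)"
    using pos imin ig
    by (intro integral_mono) (auto simp: norm_mult intro!: mult_right_mono)
  also have "\<dots> = phi y * (\<integral>x. cmod (g x) \<partial>M)" by simp
  finally show ?thesis .
qed

lemma qC:
  assumes phi[measurable]: "phi \<in> borel_measurable M" and g: "g \<in> L2 M"
  shows "quant_nonneg M phi g \<in> borel_measurable M"
proof -
  have [measurable]: "g \<in> borel_measurable M" using g by (simp add: L2_def)
  show ?thesis unfolding quant_nonneg_def
    by (rule borel_measurable_lebesgue_integral) measurable
qed

lemma qD:
  assumes phi[measurable]: "phi \<in> borel_measurable M" and [measurable]: "g \<in> borel_measurable M" "g' \<in> borel_measurable M"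
    and "AE x in M. g x = g' x"
  shows "quant_nonneg M phi g y = quant_nonneg M phi g' y"
  unfolding quant_nonneg_def using assms by (intro integral_cong_AE) auto

lemma qE:
  assumes phi[measurable]: "phi \<in> borel_measurable M" and pos: "\<And>x. 0 \<le> phi x"
    and g: "g \<in> L2 M" and h: "h \<in> L2 M"
  shows "quant_nonneg M phi (\<lambda>x. a * g x + b * h x) y = a * quant_nonneg M phi g y + b * quant_nonneg M phi h y"
proof -
  have "quant_nonneg M phi (\<lambda>x. a * g x + b * h x) y =
     (\<integral>x. a * (complex_of_real (min (phi x) (phi y)) * g x) + b * (complex_of_real (min (phi x) (phi y)) * h x) \<partial>M)"
    unfolding quant_nonneg_def by (simp add: algebra_simps)
  also have "\<dots> = a * quant_nonneg M phi g y + b * quant_nonneg M phi h y"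
    unfolding quant_nonneg_def
    using qA[OF phi pos g, of y] qA[OF phi pos h, of y] by simp
  finally show ?thesis .
qed

lemma qG:
  assumes phi[measurable]: "phi \<in> borel_measurable M" and pos: "\<And>x. 0 \<le> phi x"
    and phi2: "integrable M (\<lambda>x. (phi x)\<^sup>2)" and g: "g \<in> L2 M"
  shows "quant_nonneg M phi g \<in> L2 M"
proof -
  let ?c = "\<integral>x. cmod (g x) \<partial>M"
  have [measurable]: "quant_nonneg M phi g \<in> borel_measurable M" by (rule qC[OF phi g])
  have "integrable M (\<lambda>y. (cmod (quant_nonneg M phi g y))\<^sup>2)"
  proof (rule Bochner_Integration.integrable_bound)
    show "integrable M (\<lambda>y. (phi y)\<^sup>2 * ?c\<^sup>2)" using phi2 by simp
    show "AE y in M. norm ((cmod (quant_nonneg M phi g y))\<^sup>2) \<le> norm ((phi y)\<^sup>2 * ?c\<^sup>2)"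
    proof (rule AE_I2)
      fix y
      have "cmod (quant_nonneg M phi g y) \<le> phi y * ?c" by (rule qB[OF phi pos g])
      then have "(cmod (quant_nonneg M phi g y))\<^sup>2 \<le> (phi y * ?c)\<^sup>2"
        by (intro power_mono) auto
      then show "norm ((cmod (quant_nonneg M phi g y))\<^sup>2) \<le> norm ((phi y)\<^sup>2 * ?c\<^sup>2)"
        by (simp add: power_mult_distrib)
    qed
  qed measurable
  then show ?thesis unfolding L2_def by simp
qed

lemma qF:
  assumes phi[measurable]: "phi \<in> borel_measurable M" and pos: "\<And>x. 0 \<le> phi x"
    and phi2: "integrable M (\<lambda>x. (phi x)\<^sup>2)" and g: "g \<in> L2 M" and h: "h \<in> L2 M"
  shows "L2inner M (quant_nonneg M phi g) h = L2inner M g (quant_nonneg M phi h)"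
proof -
  interpret P: pair_sigma_finite M M
    by (simp add: pair_sigma_finite_def sigma_finite_measure_axioms)
  have [measurable]: "g \<in> borel_measurable M" "h \<in> borel_measurable M"
    using g h by (simp_all add: L2_def)
  define K where "K x y = cnj (g x) * (complex_of_real (min (phi x) (phi y)) * h y)" for x y
  have Km[measurable]: "case_prod K \<in> borel_measurable (M \<Otimes>\<^sub>M M)"
    unfolding K_def by measurable
  have ih: "integrable M (\<lambda>x. cmod (h x))" using L2_int[OF h] by simp
  have int2: "integrable M (\<lambda>y. K x y)" for x
  proof -
    have "integrable M (\<lambda>y. complex_of_real (min (phi y) (phi x)) * h y)" by (rule qA[OF phi pos h])
    then show ?thesis unfolding K_def by (simp add: min.commute)
  qed
  have gphi: "integrable M (\<lambda>x. cmod (g x) * phi x)"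
    by (rule prod_int) (use g phi2 in \<open>auto simp: L2_def\<close>)
  have int1: "integrable M (\<lambda>x. \<integral>y. norm (K x y) \<partial>M)"
  proof (rule Bochner_Integration.integrable_bound)
    show "integrable M (\<lambda>x. cmod (g x) * phi x * (\<integral>y. cmod (h y) \<partial>M))" using gphi by simp
    show "AE x in M. norm (\<integral>y. norm (K x y) \<partial>M) \<le> norm (cmod (g x) * phi x * (\<integral>y. cmod (h y) \<partial>M))"
    proof (rule AE_I2)
      fix x
      have pw: "norm (K x y) \<le> cmod (g x) * phi x * cmod (h y)" for y
      proof -
        have "norm (K x y) = cmod (g x) * (min (phi x) (phi y) * cmod (h y))"
          using pos[of x] pos[of y] by (simp add: K_def norm_mult)
        also have "\<dots> \<le> cmod (g x) * (phi x * cmod (h y))"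
          by (intro mult_left_mono mult_right_mono) auto
        finally show ?thesis by (simp add: mult.assoc)
      qed
      have "(\<integral>y. norm (K x y) \<partial>M) \<le> (\<integral>y. cmod (g x) * phi x * cmod (h y) \<partial>M)"
        using integrable_norm[OF int2[of x]] ih pw
        by (intro integral_mono) auto
      also have "\<dots> = cmod (g x) * phi x * (\<integral>y. cmod (h y) \<partial>M)" by simp
      finally show "norm (\<integral>y. norm (K x y) \<partial>M) \<le> norm (cmod (g x) * phi x * (\<integral>y. cmod (h y) \<partial>M))"
        using pos[of x] by (simp add: abs_of_nonneg)
    qed
    show "(\<lambda>x. \<integral>y. norm (K x y) \<partial>M) \<in> borel_measurable M"
      by (rule borel_measurable_lebesgue_integral) measurable
  qed
  have intK: "integrable (M \<Otimes>\<^sub>M M) (case_prod K)"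
    by (rule P.Fubini_integrable) (use int1 int2 in auto)
  have e1: "cnj (quant_nonneg M phi g y) * h y = (\<integral>x. K x y \<partial>M)" for y
  proof -
    have "(\<integral>x. K x y \<partial>M) = (\<integral>x. cnj (complex_of_real (min (phi x) (phi y)) * g x) * h y \<partial>M)"
      by (rule Bochner_Integration.integral_cong) (auto simp: K_def)
    also have "\<dots> = cnj (quant_nonneg M phi g y) * h y"
      unfolding quant_nonneg_def by (simp only: integral_mult_left_zero) (rule arg_cong[where f="\<lambda>z. z * h y"], rule Bochner_Integration.integral_cnj)
    finally show ?thesis by simp
  qed
  have e2: "cnj (g x) * quant_nonneg M phi h x = (\<integral>y. K x y \<partial>M)" for x
  proof -
    have "(\<integral>y. K x y \<partial>M) = (\<integral>y. cnj (g x) * (complex_of_real (min (phi y) (phi x)) * h y) \<partial>M)"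
      by (rule Bochner_Integration.integral_cong) (auto simp: K_def min.commute)
    also have "\<dots> = cnj (g x) * quant_nonneg M phi h x"
      unfolding quant_nonneg_def by (simp only: integral_mult_right_zero)
    finally show ?thesis by simp
  qed
  have "L2inner M (quant_nonneg M phi g) h = (\<integral>y. (\<integral>x. K x y \<partial>M) \<partial>M)"
    unfolding L2inner_def by (simp only: e1)
  also have "\<dots> = (\<integral>x. (\<integral>y. K x y \<partial>M) \<partial>M)"
    by (rule P.Fubini_integral[OF intK])
  also have "\<dots> = L2inner M g (quant_nonneg M phi h)"
    unfolding L2inner_def by (simp only: e2)
  finally show ?thesis .
qed

lemma inner_int:
  assumes u: "u \<in> L2 M" and v: "v \<in> L2 M"
  shows "integrable M (\<lambda>x. cnj (u x) * v x)"
proof -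
  have [measurable]: "u \<in> borel_measurable M" "v \<in> borel_measurable M" using u v by (simp_all add: L2_def)
  have "integrable M (\<lambda>x. cmod (u x) * cmod (v x))"
    by (rule prod_int) (use u v in \<open>auto simp: L2_def\<close>)
  then show ?thesis
    by (rule Bochner_Integration.integrable_bound) (auto simp: norm_mult)
qed

lemma pn_facts:
  assumes f: "random_var M f"
  shows "pos_part f \<in> borel_measurable M" "\<And>x. 0 \<le> pos_part f x" "integrable M (\<lambda>x. (pos_part f x)\<^sup>2)"
    "neg_part f \<in> borel_measurable M" "\<And>x. 0 \<le> neg_part f x" "integrable M (\<lambda>x. (neg_part f x)\<^sup>2)"
    "\<And>x. pos_part f x + neg_part f x = \<bar>f x\<bar>"
proof -
  have fm[measurable]: "f \<in> borel_measurable M" and f2: "integrable M (\<lambda>x. (f x)\<^sup>2)"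
    using f by (simp_all add: random_var_def)
  show pm: "pos_part f \<in> borel_measurable M" "neg_part f \<in> borel_measurable M"
    unfolding pos_part_def neg_part_def by measurable
  show "\<And>x. 0 \<le> pos_part f x" "\<And>x. 0 \<le> neg_part f x" "\<And>x. pos_part f x + neg_part f x = \<bar>f x\<bar>"
    by (auto simp: pos_part_def neg_part_def)
  show "integrable M (\<lambda>x. (pos_part f x)\<^sup>2)"
    by (rule Bochner_Integration.integrable_bound[OF f2]) (use pm in \<open>auto simp: pos_part_def max_def\<close>)
  show "integrable M (\<lambda>x. (neg_part f x)\<^sup>2)"
    by (rule Bochner_Integration.integrable_bound[OF f2]) (use pm in \<open>auto simp: neg_part_def min_def\<close>)
qed

lemma qH:
  assumes f: "random_var M f" and g: "g \<in> L2 M"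
  shows "cmod (quant M f g y) \<le> \<bar>f y\<bar> * (\<integral>x. cmod (g x) \<partial>M)"
proof -
  note pn = pn_facts[OF f]
  have "cmod (quant M f g y) \<le> cmod (quant_nonneg M (pos_part f) g y) + cmod (quant_nonneg M (neg_part f) g y)"
    unfolding quant_def by (rule norm_triangle_ineq4)
  also have "\<dots> \<le> pos_part f y * (\<integral>x. cmod (g x) \<partial>M) + neg_part f y * (\<integral>x. cmod (g x) \<partial>M)"
    by (intro add_mono qB pn g)
  also have "\<dots> = \<bar>f y\<bar> * (\<integral>x. cmod (g x) \<partial>M)"
    by (simp add: pn(7) distrib_right[symmetric])
  finally show ?thesis .
qed

lemma qL2:
  assumes f: "random_var M f" and g: "g \<in> L2 M"
  shows "quant M f g \<in> L2 M"
    and "L2norm M (quant M f g) \<le> L2norm M (\<lambda>x. complex_of_real (f x)) * L2norm M g"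
proof -
  note pn = pn_facts[OF f]
  have fm[measurable]: "f \<in> borel_measurable M" and f2: "integrable M (\<lambda>x. (f x)\<^sup>2)"
    using f by (simp_all add: random_var_def)
  let ?c = "\<integral>x. cmod (g x) \<partial>M"
  have c0: "0 \<le> ?c" by simp
  have [measurable]: "quant_nonneg M (pos_part f) g \<in> borel_measurable M"
      "quant_nonneg M (neg_part f) g \<in> borel_measurable M"
    using qC[OF pn(1) g] qC[OF pn(4) g] .
  have qm[measurable]: "quant M f g \<in> borel_measurable M"
    unfolding quant_def[abs_def] by measurable
  have pw: "(cmod (quant M f g y))\<^sup>2 \<le> (f y)\<^sup>2 * ?c\<^sup>2" for y
  proof -
    have "(cmod (quant M f g y))\<^sup>2 \<le> (\<bar>f y\<bar> * ?c)\<^sup>2"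
      by (intro power_mono qH[OF f g]) auto
    then show ?thesis by (simp add: power_mult_distrib)
  qed
  have iq: "integrable M (\<lambda>y. (cmod (quant M f g y))\<^sup>2)"
  proof (rule Bochner_Integration.integrable_bound)
    show "integrable M (\<lambda>y. (f y)\<^sup>2 * ?c\<^sup>2)" using f2 by simp
    show "AE y in M. norm ((cmod (quant M f g y))\<^sup>2) \<le> norm ((f y)\<^sup>2 * ?c\<^sup>2)"
      using pw by (intro AE_I2) simp
  qed measurable
  then show "quant M f g \<in> L2 M" unfolding L2_def by simp
  have "(\<integral>y. (cmod (quant M f g y))\<^sup>2 \<partial>M) \<le> (\<integral>y. (f y)\<^sup>2 * ?c\<^sup>2 \<partial>M)"
    using iq f2 pw by (intro integral_mono) auto
  also have "\<dots> = ?c\<^sup>2 * (\<integral>y. (f y)\<^sup>2 \<partial>M)" by (simp add: mult.commute)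
  finally have le: "(\<integral>y. (cmod (quant M f g y))\<^sup>2 \<partial>M) \<le> ?c\<^sup>2 * (\<integral>y. (f y)\<^sup>2 \<partial>M)" .
  have "L2norm M (quant M f g) \<le> sqrt (?c\<^sup>2 * (\<integral>y. (f y)\<^sup>2 \<partial>M))"
    unfolding L2norm_def using le by simp
  also have "\<dots> = ?c * sqrt (\<integral>y. (f y)\<^sup>2 \<partial>M)"
    using c0 by (simp add: real_sqrt_mult)
  also have "\<dots> \<le> L2norm M g * sqrt (\<integral>y. (f y)\<^sup>2 \<partial>M)"
    by (intro mult_right_mono L1_le_norm g) simp
  also have "\<dots> = L2norm M (\<lambda>x. complex_of_real (f x)) * L2norm M g"
    by (simp add: L2norm_def mult.commute)
  finally show "L2norm M (quant M f g) \<le> L2norm M (\<lambda>x. complex_of_real (f x)) * L2norm M g" .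
qed

end

theorem mainTheorem7:
  fixes M :: "'a measure" and f :: "'a \<Rightarrow> real"
  assumes "prob_space M" and "random_var M f"
  shows
    \<comment> \<open>well-defined: the defining integrals exist\<close>
    "(\<forall>g\<in>L2 M. \<forall>y\<in>space M.
        integrable M (\<lambda>x. complex_of_real (min (pos_part f x) (pos_part f y)) * g x) \<and>
        integrable M (\<lambda>x. complex_of_real (min (neg_part f x) (neg_part f y)) * g x))
   \<comment> \<open>maps H into H\<close>
   \<and> (\<forall>g\<in>L2 M. quant M f g \<in> L2 M)
   \<comment> \<open>independent of the representative of the a.e.-class\<close>
   \<and> (\<forall>g\<in>L2 M. \<forall>g'\<in>L2 M. (AE x in M. g x = g' x) \<longrightarrow>
        (\<forall>y\<in>space M. quant M f g y = quant M f g' y))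
   \<comment> \<open>linear\<close>
   \<and> (\<forall>g\<in>L2 M. \<forall>h\<in>L2 M. \<forall>a b. \<forall>y\<in>space M.
        quant M f (\<lambda>x. a * g x + b * h x) y = a * quant M f g y + b * quant M f h y)
   \<comment> \<open>bounded\<close>
   \<and> (\<exists>C. \<forall>g\<in>L2 M. L2norm M (quant M f g) \<le> C * L2norm M g)
   \<comment> \<open>self-adjoint\<close>
   \<and> (\<forall>g\<in>L2 M. \<forall>h\<in>L2 M. L2inner M (quant M f g) h = L2inner M g (quant M f h))
   \<comment> \<open>norm bound for nonnegative f\<close>
   \<and> ((AE x in M. 0 \<le> f x) \<longrightarrow>
        (\<forall>g\<in>L2 M. L2norm M (quant M f g) \<le> L2norm M (\<lambda>x. complex_of_real (f x)) * L2norm M g))"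
proof -
  interpret prob_space M by (rule assms(1))
  note f = assms(2)
  note pn = pn_facts[OF f]
  let ?p = "pos_part f" and ?n = "neg_part f"
  have A: "\<forall>g\<in>L2 M. \<forall>y\<in>space M.
        integrable M (\<lambda>x. complex_of_real (min (pos_part f x) (pos_part f y)) * g x) \<and>
        integrable M (\<lambda>x. complex_of_real (min (neg_part f x) (neg_part f y)) * g x)"
    using qA[OF pn(1,2)] qA[OF pn(4,5)] by blast
  have B: "\<forall>g\<in>L2 M. quant M f g \<in> L2 M" using qL2(1)[OF f] by blast
  have C: "\<forall>g\<in>L2 M. \<forall>g'\<in>L2 M. (AE x in M. g x = g' x) \<longrightarrow>
        (\<forall>y\<in>space M. quant M f g y = quant M f g' y)"
  proof (intro ballI impI)
    fix g g' y assume g: "g \<in> L2 M" and g': "g' \<in> L2 M" and ae: "AE x in M. g x = g' x"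
    have gm: "g \<in> borel_measurable M" "g' \<in> borel_measurable M" using g g' by (simp_all add: L2_def)
    show "quant M f g y = quant M f g' y"
      unfolding quant_def using qD[OF pn(1) gm ae] qD[OF pn(4) gm ae] by simp
  qed
  have D: "\<forall>g\<in>L2 M. \<forall>h\<in>L2 M. \<forall>a b. \<forall>y\<in>space M.
        quant M f (\<lambda>x. a * g x + b * h x) y = a * quant M f g y + b * quant M f h y"
    unfolding quant_def using qE[OF pn(1,2)] qE[OF pn(4,5)] by (simp add: algebra_simps)
  have E: "\<exists>C. \<forall>g\<in>L2 M. L2norm M (quant M f g) \<le> C * L2norm M g"
    using qL2(2)[OF f] by blast
  have F: "\<forall>g\<in>L2 M. \<forall>h\<in>L2 M. L2inner M (quant M f g) h = L2inner M g (quant M f h)"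
  proof (intro ballI)
    fix g h assume g: "g \<in> L2 M" and h: "h \<in> L2 M"
    have Gp: "quant_nonneg M ?p g \<in> L2 M" "quant_nonneg M ?n g \<in> L2 M"
        "quant_nonneg M ?p h \<in> L2 M" "quant_nonneg M ?n h \<in> L2 M"
      using qG[OF pn(1,2,3)] qG[OF pn(4,5,6)] g h by blast+
    have "L2inner M (quant M f g) h =
        L2inner M (quant_nonneg M ?p g) h - L2inner M (quant_nonneg M ?n g) h"
      unfolding L2inner_def quant_def
      using inner_int[OF Gp(1) h] inner_int[OF Gp(2) h]
      by (simp add: left_diff_distrib)
    also have "\<dots> = L2inner M g (quant_nonneg M ?p h) - L2inner M g (quant_nonneg M ?n h)"
      using qF[OF pn(1,2,3) g h] qF[OF pn(4,5,6) g h] by simp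
    also have "\<dots> = L2inner M g (quant M f h)"
      unfolding L2inner_def quant_def
      using inner_int[OF g Gp(3)] inner_int[OF g Gp(4)]
      by (simp add: right_diff_distrib)
    finally show "L2inner M (quant M f g) h = L2inner M g (quant M f h)" .
  qed
  have G: "(AE x in M. 0 \<le> f x) \<longrightarrow>
        (\<forall>g\<in>L2 M. L2norm M (quant M f g) \<le> L2norm M (\<lambda>x. complex_of_real (f x)) * L2norm M g)"
    using qL2(2)[OF f] by blast
  show ?thesis using A B C D E F G by blast
qed

end
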